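(* Let $\Bbbk$ be a field, $S$ a finite set, $U_S$ the $\Bbbk$-vector space with basis $\{e_a : a\in S\}$, $\phi\colon U_S\to W$ a $\Bbbk$-linear map, $\mathbf M=\mathbf M(\phi)$ the matroid on $S$ represented by $\phi$, and $\omega$ a total ordering of $S$. Then \[ \dim_\Bbbk H_i(V(\phi,\omega)_\bullet)=\begin{cases}\beta(\mathbf M) & \text{if } i=|S|-r(\mathbf M),\\ 0 & \text{otherwise.}\end{cases} \]
   Context: For $B\subseteq S$ let $V_B=\phi(\operatorname{span}\{e_a:a\in B\})\subseteq W$. The matroid $\mathbf M(\phi)$ has as independent sets those $I\subseteq S$ with $\dim V_I=|I|$; its rank function is $r(J)=\dim V_J$, and $r(\mathbf M)=r(S)$. The $\beta$-invariant is $\beta(\mathbf M)=(-1)^{r(S)}\sum_{J\subseteq S}(-1)^{|J|}r(J)$. Subsets of $S$ are identified with increasing sequences with respect to $\omega$. The complex $V(\phi,\omega)_\bullet$ has $V(\phi,\omega)_i=\bigoplus_{B\subseteq S,\ |B|=|S|-i,\ B\neq\emptyset} V_B$ (from $i=|S|-1$ down to $i=0$, where it is $V_S$), and its differential has, for $c\notin B$, component $V_B\to V_{B\cup\{c\}}$ equal to the inclusion multiplied by the sign of the permutation that sorts the sequence $(c,B)$ into increasing order (all other components zero). *)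

theory Defs
  imports Complex_Main "HOL-Library.Function_Algebras"
begin

text \<open>Setting: a field 'k, a k-vector space 'w given by a scalar multiplication
  sc :: 'k => 'w => 'w (with vector_space sc), a finite ground set S :: 'a set,
  U_S realised as the functions 'a => 'k vanishing outside S, with basis e_a.\<close>

definition scU :: "'k::field \<Rightarrow> ('a \<Rightarrow> 'k) \<Rightarrow> ('a \<Rightarrow> 'k)" where
  "scU c u = (\<lambda>a. c * u a)"

definition eU :: "'a \<Rightarrow> ('a \<Rightarrow> 'k::field)" where
  "eU a = (\<lambda>x. if x = a then 1 else 0)"

definition U_S :: "'a set \<Rightarrow> ('a \<Rightarrow> 'k::field) set" where
  "U_S S = {u. \<forall>a. a \<notin> S \<longrightarrow> u a = 0}"

definition linear_on_US ::
  "('k::field \<Rightarrow> 'w::ab_group_add \<Rightarrow> 'w) \<Rightarrow> 'a set \<Rightarrow> (('a \<Rightarrow> 'k) \<Rightarrow> 'w) \<Rightarrow> bool" where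
  "linear_on_US sc S phi \<longleftrightarrow>
     (\<forall>u\<in>U_S S. \<forall>v\<in>U_S S. phi (u + v) = phi u + phi v) \<and>
     (\<forall>c. \<forall>u\<in>U_S S. phi (scU c u) = sc c (phi u))"

definition VB ::
  "('k::field \<Rightarrow> 'w::ab_group_add \<Rightarrow> 'w) \<Rightarrow> (('a \<Rightarrow> 'k) \<Rightarrow> 'w) \<Rightarrow> 'a set \<Rightarrow> 'w set" where
  "VB sc phi B = phi ` module.span scU (eU ` B)"

definition mrank ::
  "('k::field \<Rightarrow> 'w::ab_group_add \<Rightarrow> 'w) \<Rightarrow> (('a \<Rightarrow> 'k) \<Rightarrow> 'w) \<Rightarrow> 'a set \<Rightarrow> nat" where
  "mrank sc phi J = vector_space.dim sc (VB sc phi J)"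

definition mindep ::
  "('k::field \<Rightarrow> 'w::ab_group_add \<Rightarrow> 'w) \<Rightarrow> (('a \<Rightarrow> 'k) \<Rightarrow> 'w) \<Rightarrow> 'a set \<Rightarrow> 'a set \<Rightarrow> bool" where
  "mindep sc phi S I \<longleftrightarrow> I \<subseteq> S \<and> mrank sc phi I = card I"

definition beta_inv ::
  "('k::field \<Rightarrow> 'w::ab_group_add \<Rightarrow> 'w) \<Rightarrow> (('a \<Rightarrow> 'k) \<Rightarrow> 'w) \<Rightarrow> 'a set \<Rightarrow> int" where
  "beta_inv sc phi S =
     (-1) ^ mrank sc phi S * (\<Sum>J\<in>Pow S. (-1) ^ card J * int (mrank sc phi J))"

text \<open>Chain groups: elements of V(phi,omega)_i = direct sum over B subset S, B nonempty,
  |B| = |S| - i of V_B, realised as functions x :: 'a set => 'w supported on those B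
  with x B in V_B.  The index i ranges over the integers (the groups are 0 outside
  0 .. |S|-1).\<close>
definition chainV ::
  "('k::field \<Rightarrow> 'w::ab_group_add \<Rightarrow> 'w) \<Rightarrow> (('a \<Rightarrow> 'k) \<Rightarrow> 'w) \<Rightarrow> 'a set \<Rightarrow> int \<Rightarrow> ('a set \<Rightarrow> 'w) set" where
  "chainV sc phi S i =
     {x. (\<forall>B. x B \<in> VB sc phi B) \<and>
         (\<forall>B. x B \<noteq> 0 \<longrightarrow> B \<subseteq> S \<and> B \<noteq> {} \<and> int (card B) = int (card S) - i)}"

definition scC :: "('k \<Rightarrow> 'w \<Rightarrow> 'w) \<Rightarrow> 'k \<Rightarrow> ('a set \<Rightarrow> 'w) \<Rightarrow> ('a set \<Rightarrow> 'w)" where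
  "scC sc c x = (\<lambda>B. sc c (x B))"

text \<open>Sign of the permutation sorting (c, B) into increasing order w.r.t. omega:
  (-1)^(number of elements of B that are omega-smaller than c).\<close>
definition sortsign :: "'a rel \<Rightarrow> 'a \<Rightarrow> 'a set \<Rightarrow> 'k::field" where
  "sortsign om c B = (-1) ^ card {b\<in>B. (b, c) \<in> om \<and> b \<noteq> c}"

text \<open>Differential: component V_B -> V_(B u {c}) (c notin B) is the inclusion times
  the sign; so (d x)(C) = sum_{c in C} sign(c, C - {c}) x(C - {c}).\<close>
definition diffV ::
  "('k::field \<Rightarrow> 'w::ab_group_add \<Rightarrow> 'w) \<Rightarrow> 'a rel \<Rightarrow> 'a set \<Rightarrow> ('a set \<Rightarrow> 'w) \<Rightarrow> ('a set \<Rightarrow> 'w)" where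
  "diffV sc om S x =
     (\<lambda>C. if C \<subseteq> S then (\<Sum>c\<in>C. sc (sortsign om c (C - {c})) (x (C - {c}))) else 0)"

definition homdim ::
  "('k::field \<Rightarrow> 'w::ab_group_add \<Rightarrow> 'w) \<Rightarrow> (('a \<Rightarrow> 'k) \<Rightarrow> 'w) \<Rightarrow> 'a rel \<Rightarrow> 'a set \<Rightarrow> int \<Rightarrow> int" where
  "homdim sc phi om S i =
     int (vector_space.dim (scC sc) {x\<in>chainV sc phi S i. diffV sc om S x = 0})
     - int (vector_space.dim (scC sc) (diffV sc om S ` chainV sc phi S (i + 1)))"

end

theory Submission
  imports Defs
begin


context vector_space begin

lemma dim_insert_gen:
  assumes "finite G" "S \<subseteq> span G"
  shows "dim (insert x S) = (if x \<in> span S then dim S else dim S + 1)"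
proof (cases "x \<in> span S")
  case True then show ?thesis
    by (metis dim_span span_redundant)
next
  case False
  obtain B where B: "B \<subseteq> span S" "independent B" "span S \<subseteq> span B" "card B = dim (span S)"
    using basis_exists [of "span S"] by blast
  have finB: "finite B"
    using independent_span_bound[OF assms(1) B(2)] B(1) assms(2)
    by (meson order_trans span_minimal subspace_span)
  have "dim (span (insert x S)) = Suc (dim S)"
  proof (rule dim_unique)
    show "insert x B \<subseteq> span (insert x S)"
      by (meson B(1) insertI1 insert_subset order_trans span_base span_mono subset_insertI)
    show "span (insert x S) \<subseteq> span (insert x B)"
      by (metis \<open>B \<subseteq> span S\<close> \<open>span S \<subseteq> span B\<close> span_breakdown_eq span_subspace subsetI subspace_span)
    show "independent (insert x B)"
      by (metis B(1-3) independent_insert span_subspace subspace_span False)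
    show "card (insert x B) = Suc (dim S)"
      using B False finB by force
  qed
  then show ?thesis
    by (metis False Suc_eq_plus1 dim_span)
qed

lemma dim_mono_gen:
  assumes "V \<subseteq> span W" "finite W"
  shows "dim V \<le> dim W"
proof -
  obtain B where B: "B \<subseteq> W" "independent B" "W \<subseteq> span B" "card B = dim W"
    using basis_exists[of W] by blast
  have "finite B" using B(1) assms(2) finite_subset by blast
  have "V \<subseteq> span B" using assms(1) B(3)
    by (metis span_minimal span_span subspace_span order_trans span_mono)
  then have "dim V \<le> card B" using dim_le_card \<open>finite B\<close> by blast
  then show ?thesis using B(4) by simp
qed

lemma dim_zero_set[simp]: "dim {0} = 0"
  using dim_eq_card[of "{}" "{0}"] independent_empty by simp

lemma dim_empty_gen[simp]: "dim {} = 0"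
  using dim_eq_card[of "{}" "{}"] independent_empty by simp

lemma finite_basis_of_fd:
  assumes "subspace V" "V \<subseteq> span G" "finite G"
  obtains B where "finite B" "V = span B"
proof -
  obtain B where B: "B \<subseteq> V" "independent B" "V \<subseteq> span B" "card B = dim V"
    using basis_exists[of V] by blast
  have "finite B"
    using independent_span_bound[OF assms(3) B(2)] B(1) assms(2) by blast
  moreover have "V = span B"
    using B assms(1) by (metis span_subspace)
  ultimately show ?thesis using that by blast
qed

end



context Vector_Spaces.linear begin

lemma rank_nullity_span:
  assumes "finite F"
  shows "vs1.dim (vs1.span F) = vs1.dim {x \<in> vs1.span F. f x = 0} + vs2.dim (f ` vs1.span F)"
  using assms
proof (induction F rule: finite_induct)
  case empty
  have e1: "{x \<in> vs1.span {}. f x = 0} = {0}" by auto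
  have e2: "f ` vs1.span {} = {0}" by auto
  show ?case unfolding e1 e2 by simp
next
  case (insert z F)
  let ?S = "vs1.span F" let ?S' = "vs1.span (insert z F)"
  let ?N = "{x \<in> ?S. f x = 0}" let ?N' = "{x \<in> ?S'. f x = 0}"
  have subN: "vs1.subspace ?N"
  proof -
    have "?N = vs1.span F \<inter> {x. f x = 0}" by blast
    then show ?thesis using vs1.subspace_inter[OF vs1.subspace_span subspace_kernel] by metis
  qed
  have spanN: "vs1.span ?N = ?N" using subN by (rule vs1.span_eq_iff[THEN iffD2])
  have NS: "?N \<subseteq> vs1.span F" by auto
  have SS': "?S \<subseteq> ?S'" by (simp add: vs1.span_mono subset_insertI)
  show ?case
  proof (cases "f z \<in> f ` ?S")
    case True
    then obtain y where y: "y \<in> ?S" "f y = f z" by auto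
    define w where "w = z - y"
    have fw: "f w = 0" using y by (simp add: w_def diff)
    have zin: "z \<in> vs1.span (insert w F)"
    proof -
      have "w \<in> vs1.span (insert w F)" by (simp add: vs1.span_base)
      moreover have "y \<in> vs1.span (insert w F)"
        using y(1) vs1.span_mono[of F "insert w F"] by blast
      ultimately have "w + y \<in> vs1.span (insert w F)" by (rule vs1.span_add)
      then show ?thesis by (simp add: w_def)
    qed
    have win: "w \<in> ?S'"
    proof -
      have "z \<in> ?S'" by (simp add: vs1.span_base)
      moreover have "y \<in> ?S'" using y(1) SS' by blast
      ultimately show ?thesis unfolding w_def by (rule vs1.span_diff)
    qed
    have S'eq: "?S' = vs1.span (insert w F)"
    proof (rule iffD2[OF vs1.span_eq], rule conjI)
      show "insert z F \<subseteq> vs1.span (insert w F)"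
        using zin vs1.span_superset[of "insert w F"] by blast
      show "insert w F \<subseteq> ?S'"
        using win vs1.span_superset[of "insert z F"] by blast
    qed
    have img: "f ` ?S' = f ` ?S"
    proof
      show "f ` ?S \<subseteq> f ` ?S'" using SS' by auto
      show "f ` ?S' \<subseteq> f ` ?S"
      proof
        fix u assume "u \<in> f ` ?S'"
        then obtain x where x: "x \<in> ?S'" "u = f x" by auto
        then obtain k where k: "x - k *a w \<in> ?S" using S'eq vs1.span_breakdown_eq by auto
        have "f (x - k *a w) = f x" by (simp add: diff scale fw)
        then show "u \<in> f ` ?S" using k x by (metis image_eqI)
      qed
    qed
    show ?thesis
    proof (cases "w \<in> ?S")
      case True
      then have "?S' = ?S" using S'eq vs1.span_redundant by simp
      then show ?thesis using insert.IH by (simp add: vs1.dim_span)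
    next
      case False
      have d1: "vs1.dim ?S' = vs1.dim ?S + 1"
        using S'eq vs1.dim_insert_gen[OF insert.hyps(1) vs1.span_superset, of w] False
        by (simp add: vs1.dim_span)
      have N'eq: "?N' = vs1.span (insert w ?N)"
      proof
        show "?N' \<subseteq> vs1.span (insert w ?N)"
        proof
          fix x assume "x \<in> ?N'"
          then have x: "x \<in> ?S'" "f x = 0" by auto
          then obtain k where k: "x - k *a w \<in> ?S" using S'eq vs1.span_breakdown_eq by auto
          have "f (x - k *a w) = 0" by (simp add: diff scale fw x)
          then have "x - k *a w \<in> ?N" using k by simp
          then have "x - k *a w \<in> vs1.span ?N" by (rule vs1.span_base)
          then show "x \<in> vs1.span (insert w ?N)" by (auto simp only: vs1.span_breakdown_eq)
        qed
        show "vs1.span (insert w ?N) \<subseteq> ?N'"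
        proof
          fix x assume "x \<in> vs1.span (insert w ?N)"
          then obtain k where k: "x - k *a w \<in> vs1.span ?N" by (auto simp only: vs1.span_breakdown_eq)
          then have k': "x - k *a w \<in> ?N" unfolding spanN .
          have wS': "w \<in> ?S'" using S'eq vs1.span_base by blast
          have xe: "x = (x - k *a w) + k *a w" by simp
          have "(x - k *a w) + k *a w \<in> ?S'"
            using k' wS' SS' vs1.span_add vs1.span_scale by blast
          then have "x \<in> ?S'" using xe by simp
          moreover have "f x = 0"
          proof -
            have "f x = f (x - k *a w) + k *b f w" using xe add scale by metis
            then show ?thesis using k' fw by simp
          qed
          ultimately show "x \<in> ?N'" by auto
        qed
      qed
      have wN: "w \<notin> vs1.span ?N" using False unfolding spanN by blast
      have d2: "vs1.dim ?N' = vs1.dim ?N + 1"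
        using N'eq vs1.dim_insert_gen[OF insert.hyps(1) NS, of w] wN
        by (simp add: vs1.dim_span)
      show ?thesis using d1 d2 img insert.IH by simp
    qed
  next
    case False
    have zS: "z \<notin> ?S" using False by blast
    have d1: "vs1.dim ?S' = vs1.dim ?S + 1"
      using vs1.dim_insert_gen[OF insert.hyps(1) vs1.span_superset, of z] zS
      by (simp add: vs1.dim_span)
    have im: "f ` ?S' = vs2.span (insert (f z) (f ` F))" "f ` ?S = vs2.span (f ` F)"
      using span_image[of "insert z F"] span_image[of F] by simp_all
    have fzn: "f z \<notin> vs2.span (f ` F)" using False im(2) by simp
    have d2: "vs2.dim (f ` ?S') = vs2.dim (f ` ?S) + 1"
      using vs2.dim_insert_gen[OF finite_imageI[OF insert.hyps(1)] vs2.span_superset, of "f z"] fzn im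
      by (simp add: vs2.dim_span)
    have N'eq: "?N' = ?N"
    proof
      show "?N \<subseteq> ?N'" using SS' by auto
      show "?N' \<subseteq> ?N"
      proof
        fix x assume "x \<in> ?N'"
        then have x: "x \<in> ?S'" "f x = 0" by auto
        then obtain k where k: "x - k *a z \<in> ?S" using vs1.span_breakdown_eq by auto
        show "x \<in> ?N"
        proof (cases "k = 0")
          case True then show ?thesis using k x by simp
        next
          case False
          have "f ((- inverse k) *a (x - k *a z)) = (- inverse k) *b (f x - k *b f z)"
            by (simp only: scale diff)
          also have "\<dots> = (inverse k * k) *b f z" using x by simp
          also have "\<dots> = f z" using False by simp
          finally have "f ((- inverse k) *a (x - k *a z)) = f z" .
          moreover have "(- inverse k) *a (x - k *a z) \<in> ?S" using k vs1.span_scale by blast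
          ultimately show ?thesis using \<open>f z \<notin> f ` ?S\<close> by (metis image_eqI)
        qed
      qed
    qed
    show ?thesis using d1 d2 N'eq insert.IH by simp
  qed
qed

lemma rank_nullity_fd:
  assumes "vs1.subspace V" "V \<subseteq> vs1.span G" "finite G"
  shows "vs1.dim V = vs1.dim {x \<in> V. f x = 0} + vs2.dim (f ` V)"
proof -
  obtain B where "finite B" "V = vs1.span B" using vs1.finite_basis_of_fd[OF assms] by blast
  then show ?thesis using rank_nullity_span by simp
qed

end



lemma pair_cancel_sum:
  fixes F :: "'a \<Rightarrow> 'a \<Rightarrow> 'b::ab_group_add"
  assumes "finite C" "\<And>c c'. c \<in> C \<Longrightarrow> c' \<in> C \<Longrightarrow> c \<noteq> c' \<Longrightarrow> F c c' + F c' c = 0"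
  shows "(\<Sum>c\<in>C. \<Sum>c'\<in>C - {c}. F c c') = 0"
  using assms
proof (induction C rule: finite_induct)
  case empty then show ?case by simp
next
  case (insert z C)
  have "(\<Sum>c\<in>insert z C. \<Sum>c'\<in>insert z C - {c}. F c c')
      = (\<Sum>c'\<in>insert z C - {z}. F z c') + (\<Sum>c\<in>C. \<Sum>c'\<in>insert z C - {c}. F c c')"
    using insert.hyps by (simp add: sum.insert)
  also have "(\<Sum>c'\<in>insert z C - {z}. F z c') = (\<Sum>c'\<in>C. F z c')"
    using insert.hyps by (metis Diff_insert_absorb)
  also have "(\<Sum>c\<in>C. \<Sum>c'\<in>insert z C - {c}. F c c') = (\<Sum>c\<in>C. F c z + (\<Sum>c'\<in>C - {c}. F c c'))"
  proof (rule sum.cong[OF refl])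
    fix c assume c: "c \<in> C"
    then have "insert z C - {c} = insert z (C - {c})" using insert.hyps by auto
    then show "(\<Sum>c'\<in>insert z C - {c}. F c c') = F c z + (\<Sum>c'\<in>C - {c}. F c c')"
      using insert.hyps by (simp add: sum.insert)
  qed
  also have "\<dots> = (\<Sum>c\<in>C. F c z) + (\<Sum>c\<in>C. \<Sum>c'\<in>C - {c}. F c c')"
    by (simp add: sum.distrib)
  also have "(\<Sum>c\<in>C. \<Sum>c'\<in>C - {c}. F c c') = 0"
    using insert.IH insert.prems by blast
  also have "(\<Sum>c'\<in>C. F z c') + ((\<Sum>c\<in>C. F c z) + 0) = (\<Sum>c\<in>C. F z c + F c z)"
    by (simp add: sum.distrib)
  also have "\<dots> = 0"
    using insert.prems insert.hyps by (intro sum.neutral) auto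
  finally show ?case .
qed

locale cx = vector_space sc for sc :: "'k::field \<Rightarrow> 'w::ab_group_add \<Rightarrow> 'w" +
  fixes om :: "'a rel" and S0 :: "'a set" and v :: "'a \<Rightarrow> 'w"
  assumes lin: "linear_order_on S0 om" and finS0: "finite S0"
begin

definition lt :: "'a \<Rightarrow> 'a \<Rightarrow> bool" where "lt b c \<longleftrightarrow> (b, c) \<in> om \<and> b \<noteq> c"

abbreviation sg :: "'a \<Rightarrow> 'a set \<Rightarrow> 'k" where "sg c B \<equiv> sortsign om c B"

abbreviation d :: "'a set \<Rightarrow> ('a set \<Rightarrow> 'w) \<Rightarrow> ('a set \<Rightarrow> 'w)" where "d T x \<equiv> diffV sc om T x"

definition hm :: "'a \<Rightarrow> ('a set \<Rightarrow> 'w) \<Rightarrow> ('a set \<Rightarrow> 'w)" where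
  "hm e x = (\<lambda>B. if e \<notin> B then sc (sg e B) (x (insert e B)) else 0)"

lemma lt_total: "b \<in> S0 \<Longrightarrow> c \<in> S0 \<Longrightarrow> b \<noteq> c \<Longrightarrow> lt b c \<or> lt c b"
  using lin unfolding linear_order_on_def total_on_def lt_def by blast

lemma lt_asym: "lt b c \<Longrightarrow> \<not> lt c b"
  using lin unfolding linear_order_on_def partial_order_on_def antisym_def lt_def by blast

lemma lt_trans: "lt a b \<Longrightarrow> lt b c \<Longrightarrow> lt a c"
  using lin lt_asym unfolding linear_order_on_def partial_order_on_def preorder_on_def trans_def lt_def
  by blast

lemma exists_max:
  assumes "finite T" "T \<noteq> {}"
  shows "\<exists>a\<in>T. \<forall>c\<in>T. \<not> lt a c"
  using assms
proof (induction T rule: finite_ne_induct)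
  case (singleton x) then show ?case using lt_def by auto
next
  case (insert x F)
  then obtain a where a: "a \<in> F" "\<forall>c\<in>F. \<not> lt a c" by blast
  show ?case
  proof (cases "lt a x")
    case True
    have "\<forall>c\<in>insert x F. \<not> lt x c"
      using True a lt_trans lt_asym lt_def by blast
    then show ?thesis by blast
  next
    case False then show ?thesis using a by blast
  qed
qed

lemma sg_insert:
  assumes "finite D" "c' \<notin> D" "c' \<noteq> c"
  shows "sg c (insert c' D) = (if lt c' c then - sg c D else sg c D)"
proof -
  have fin: "finite {b \<in> D. (b, c) \<in> om \<and> b \<noteq> c}" using assms(1) by simp
  show ?thesis
  proof (cases "lt c' c")
    case True
    then have "{b \<in> insert c' D. (b, c) \<in> om \<and> b \<noteq> c} = insert c' {b \<in> D. (b, c) \<in> om \<and> b \<noteq> c}"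
      unfolding lt_def by auto
    then show ?thesis using True fin assms(2) by (simp add: sortsign_def)
  next
    case False
    then have "{b \<in> insert c' D. (b, c) \<in> om \<and> b \<noteq> c} = {b \<in> D. (b, c) \<in> om \<and> b \<noteq> c}"
      unfolding lt_def by auto
    then show ?thesis using False by (simp add: sortsign_def)
  qed
qed

lemma sg_sq: "sg c D * sg c D = 1"
  unfolding sortsign_def by (simp flip: power_mult_distrib)

lemma sc_sg_sq: "sc (sg c D) (sc (sg c D) x) = x"
  using sg_sq by simp

lemma d_in: "C \<subseteq> T \<Longrightarrow> d T x C = (\<Sum>c\<in>C. sc (sg c (C - {c})) (x (C - {c})))"
  by (simp add: diffV_def)

lemma d_out: "\<not> C \<subseteq> T \<Longrightarrow> d T x C = 0"
  by (simp add: diffV_def)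

lemma d_zero: "d T (\<lambda>B. 0) = (\<lambda>B. 0)"
  by (simp add: diffV_def fun_eq_iff)

lemma d_add: "d T (\<lambda>B. x B + y B) C = d T x C + d T y C"
  by (simp add: diffV_def scale_right_distrib sum.distrib)

lemma d_diff: "d T (\<lambda>B. x B - y B) C = d T x C - d T y C"
  by (simp add: diffV_def scale_right_diff_distrib sum_subtractf)

lemma d_scale: "d T (\<lambda>B. sc k (x B)) C = sc k (d T x C)"
  by (simp add: diffV_def scale_sum_right mult.commute)

lemma d_sub:
  assumes "subspace V" "\<And>B. x B \<in> V"
  shows "d T x C \<in> V"
  unfolding diffV_def using assms
  by (auto intro!: subspace_sum subspace_scale subspace_0)


lemma d_d:
  assumes "finite T" "T \<subseteq> S0"
  shows "d T (d T x) C = 0"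
proof (cases "C \<subseteq> T")
  case False then show ?thesis by (simp add: d_out)
next
  case True
  have finC: "finite C" using True assms(1) finite_subset by blast
  define F where "F c c' = sc (sg c (C - {c}) * sg c' (C - {c} - {c'})) (x (C - {c} - {c'}))" for c c'
  have "d T (d T x) C = (\<Sum>c\<in>C. sc (sg c (C - {c})) (d T x (C - {c})))"
    using True by (simp add: d_in)
  also have "\<dots> = (\<Sum>c\<in>C. \<Sum>c'\<in>C - {c}. F c c')"
  proof (rule sum.cong[OF refl])
    fix c assume "c \<in> C"
    have "C - {c} \<subseteq> T" using True by blast
    then show "sc (sg c (C - {c})) (d T x (C - {c})) = (\<Sum>c'\<in>C - {c}. F c c')"
      by (simp add: d_in scale_sum_right F_def)
  qed
  also have "\<dots> = 0"
  proof (rule pair_cancel_sum[OF finC])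
    fix c c' assume cc: "c \<in> C" "c' \<in> C" "c \<noteq> c'"
    define D where "D = C - {c} - {c'}"
    have D1: "C - {c} = insert c' D" "C - {c'} = insert c D" "C - {c'} - {c} = D"
      using cc unfolding D_def by auto
    have fD: "finite D" "c \<notin> D" "c' \<notin> D" using finC unfolding D_def by auto
    have s1: "sg c (C - {c}) = (if lt c' c then - sg c D else sg c D)"
      using sg_insert[OF fD(1) fD(3)] cc D1 by simp
    have s2: "sg c' (C - {c'}) = (if lt c c' then - sg c' D else sg c' D)"
      using sg_insert[OF fD(1) fD(2)] cc D1 by simp
    have cS: "c \<in> S0" "c' \<in> S0" using cc True assms(2) by auto
    have ex: "(lt c' c \<and> \<not> lt c c') \<or> (lt c c' \<and> \<not> lt c' c)"
      using lt_total[OF cS cc(3)] lt_asym by blast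
    have "F c c' + F c' c = sc (sg c (C - {c}) * sg c' D + sg c' (C - {c'}) * sg c D) (x D)"
    proof -
      have "D - {c'} = D" "D - {c} = D" using fD by auto
      then show ?thesis unfolding F_def D1 by (simp add: scale_left_distrib)
    qed
    also have "sg c (C - {c}) * sg c' D + sg c' (C - {c'}) * sg c D = 0"
      using ex s1 s2 by (auto simp: algebra_simps)
    finally show "F c c' + F c' c = 0" by simp
  qed
  finally show ?thesis .
qed

lemma d_d_fun:
  assumes "finite T" "T \<subseteq> S0"
  shows "d T (d T x) = (\<lambda>C. 0)"
  using d_d[OF assms] by (simp add: fun_eq_iff)

lemma homotopy:
  assumes "finite T" "T \<subseteq> S0" "e \<in> T" "\<And>B. x B \<noteq> 0 \<Longrightarrow> B \<subseteq> T"
  shows "d T (hm e x) C + hm e (d T x) C = x C"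
proof (cases "C \<subseteq> T")
  case False
  then have "x C = 0" using assms(4) by blast
  moreover have "\<not> insert e C \<subseteq> T" using False by blast
  ultimately show ?thesis using False by (simp add: d_out hm_def)
next
  case True
  have finC: "finite C" using True assms(1) finite_subset by blast
  show ?thesis
  proof (cases "e \<in> C")
    case True2: True
    have "d T (hm e x) C = (\<Sum>c\<in>C. sc (sg c (C - {c})) (hm e x (C - {c})))"
      using True by (simp add: d_in)
    also have "\<dots> = sc (sg e (C - {e})) (hm e x (C - {e}))
        + (\<Sum>c\<in>C - {e}. sc (sg c (C - {c})) (hm e x (C - {c})))"
      using finC True2 by (simp add: sum.remove)
    also have "(\<Sum>c\<in>C - {e}. sc (sg c (C - {c})) (hm e x (C - {c}))) = 0"
      using True2 by (intro sum.neutral) (auto simp: hm_def)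
    also have "sc (sg e (C - {e})) (hm e x (C - {e})) = x C"
      using True2 by (simp add: hm_def sg_sq insert_absorb)
    finally show ?thesis using True2 by (simp add: hm_def)
  next
    case False2: False
    have eC: "insert e C \<subseteq> T" using True assms(3) by blast
    have "d T x (insert e C) = (\<Sum>c\<in>insert e C. sc (sg c (insert e C - {c})) (x (insert e C - {c})))"
      using eC by (simp add: d_in)
    also have "\<dots> = sc (sg e C) (x C) + (\<Sum>c\<in>C. sc (sg c (insert e (C - {c}))) (x (insert e (C - {c}))))"
    proof -
      have "\<And>c. c \<in> C \<Longrightarrow> insert e C - {c} = insert e (C - {c})" using False2 by auto
      then show ?thesis using finC False2 by (simp add: sum.insert)
    qed
    finally have dx: "d T x (insert e C) = \<dots>" .
    have h2: "hm e (d T x) C = x C + (\<Sum>c\<in>C. sc (sg e C * sg c (insert e (C - {c}))) (x (insert e (C - {c}))))"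
      using False2 by (simp add: hm_def dx scale_right_distrib sg_sq scale_sum_right)
    have h1: "d T (hm e x) C = (\<Sum>c\<in>C. sc (sg c (C - {c}) * sg e (C - {c})) (x (insert e (C - {c}))))"
      using True False2 by (simp add: d_in hm_def)
    have canc: "sg e C * sg c (insert e (C - {c})) + sg c (C - {c}) * sg e (C - {c}) = 0" if c: "c \<in> C" for c
    proof -
      have f: "finite (C - {c})" "c \<notin> C - {c}" "e \<notin> C - {c}" using finC False2 by auto
      have ce: "c \<noteq> e" using c False2 by auto
      have s1: "sg e C = (if lt c e then - sg e (C - {c}) else sg e (C - {c}))"
        using sg_insert[OF f(1) f(2), of e] ce c by (simp add: insert_absorb)
      have s2: "sg c (insert e (C - {c})) = (if lt e c then - sg c (C - {c}) else sg c (C - {c}))"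
        using sg_insert[OF f(1) f(3), of c] ce by simp
      have cS: "c \<in> S0" "e \<in> S0" using c True assms(2,3) by auto
      have ex: "(lt c e \<and> \<not> lt e c) \<or> (lt e c \<and> \<not> lt c e)"
        using lt_total[OF cS ce] lt_asym by blast
      show ?thesis using ex s1 s2 by (auto simp: algebra_simps)
    qed
    have "d T (hm e x) C + hm e (d T x) C
        = x C + (\<Sum>c\<in>C. sc (sg e C * sg c (insert e (C - {c})) + sg c (C - {c}) * sg e (C - {c})) (x (insert e (C - {c}))))"
      unfolding h1 h2 by (simp add: scale_left_distrib sum.distrib algebra_simps)
    also have "\<dots> = x C" using canc by simp
    finally show ?thesis .
  qed
qed

end



context cx begin

definition P :: "'a set \<Rightarrow> 'a set \<Rightarrow> 'w set" where "P A B = span (v ` (A \<union> B))"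

definition chains :: "'a set \<Rightarrow> 'a set \<Rightarrow> int \<Rightarrow> ('a set \<Rightarrow> 'w) \<Rightarrow> bool" where
  "chains A T k x \<longleftrightarrow> (\<forall>B. x B \<in> P A B) \<and> (\<forall>B. x B \<noteq> 0 \<longrightarrow> B \<subseteq> T \<and> int (card B) = k)"

definition exact_at :: "'a set \<Rightarrow> 'a set \<Rightarrow> int \<Rightarrow> bool" where
  "exact_at A T k \<longleftrightarrow> (\<forall>x. chains A T k x \<and> (\<forall>C. d T x C \<in> span (v ` A)) \<longrightarrow>
     (\<exists>y. chains A T (k - 1) y \<and> (\<forall>B. x B - d T y B \<in> span (v ` A))))"

definition rk :: "'a set \<Rightarrow> 'a set \<Rightarrow> nat" where
  "rk A T = dim (v ` (A \<union> T)) - dim (v ` A)"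

lemma P_sub: "subspace (P A B)" by (simp add: P_def)

lemma Z_sub_P: "span (v ` A) \<subseteq> P A B"
  unfolding P_def by (intro span_mono) auto

lemma P_mono: "B \<subseteq> B' \<Longrightarrow> P A B \<subseteq> P A B'"
  unfolding P_def by (intro span_mono) auto

lemma chainsD: "chains A T k x \<Longrightarrow> x B \<in> P A B"
  "chains A T k x \<Longrightarrow> x B \<noteq> 0 \<Longrightarrow> B \<subseteq> T"
  "chains A T k x \<Longrightarrow> x B \<noteq> 0 \<Longrightarrow> int (card B) = k"
  by (auto simp: chains_def)

lemma chainsI:
  "(\<And>B. x B \<in> P A B) \<Longrightarrow> (\<And>B. x B \<noteq> 0 \<Longrightarrow> B \<subseteq> T \<and> int (card B) = k) \<Longrightarrow> chains A T k x"
  by (simp add: chains_def)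

lemma chains_zero: "chains A T k (\<lambda>B. 0)"
  by (simp add: chains_def P_def span_zero)

lemma chains_add:
  assumes "chains A T k x" "chains A T k y" shows "chains A T k (\<lambda>B. x B + y B)"
proof (rule chainsI)
  fix B
  show "x B + y B \<in> P A B" using assms chainsD(1) P_def span_add by metis
next
  fix B
  assume "x B + y B \<noteq> 0"
  then have "x B \<noteq> 0 \<or> y B \<noteq> 0" by auto
  then show "B \<subseteq> T \<and> int (card B) = k" using assms chainsD(2,3) by metis
qed

lemma chains_diff:
  assumes "chains A T k x" "chains A T k y" shows "chains A T k (\<lambda>B. x B - y B)"
proof (rule chainsI)
  fix B
  show "x B - y B \<in> P A B" using assms chainsD(1) P_def span_diff by metis
next
  fix B
  assume "x B - y B \<noteq> 0"
  then have "x B \<noteq> 0 \<or> y B \<noteq> 0" by auto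
  then show "B \<subseteq> T \<and> int (card B) = k" using assms chainsD(2,3) by metis
qed

lemma chains_mono: "chains A T k x \<Longrightarrow> T \<subseteq> T' \<Longrightarrow> chains A T' k x"
  unfolding chains_def by blast

lemma chains_d:
  assumes "finite T" "chains A T k y"
  shows "chains A T (k + 1) (d T y)"
  unfolding chains_def
proof (intro conjI allI impI)
  fix C
  show "d T y C \<in> P A C"
  proof (cases "C \<subseteq> T")
    case False then show ?thesis by (simp add: d_out P_def span_zero)
  next
    case True
    have "\<And>c. c \<in> C \<Longrightarrow> y (C - {c}) \<in> P A C"
      using chainsD(1)[OF assms(2)] P_mono[of "C - {_}" C A] by blast
    then show ?thesis using True by (simp add: d_in) (intro subspace_sum[OF P_sub] subspace_scale[OF P_sub])
  qed
next
  fix C assume ne: "d T y C \<noteq> 0"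
  then show "C \<subseteq> T" using d_out by blast
  then have fC: "finite C" using assms(1) finite_subset by blast
  have "\<exists>c\<in>C. y (C - {c}) \<noteq> 0"
  proof (rule ccontr)
    assume "\<not> ?thesis"
    then have "d T y C = 0" using \<open>C \<subseteq> T\<close> by (simp add: d_in)
    then show False using ne by simp
  qed
  then obtain c where c: "c \<in> C" "y (C - {c}) \<noteq> 0" by blast
  then have "int (card (C - {c})) = k" using chainsD(3)[OF assms(2)] by blast
  then show "int (card C) = k + 1" using c fC by (simp add: card_Diff_singleton_if) (metis Suc_pred card_gt_0_iff empty_iff of_nat_Suc add.commute)
qed

lemma exact_if_Z:
  assumes "\<And>B. x B \<in> span (v ` A)"
  shows "\<exists>y. chains A T (k - 1) y \<and> (\<forall>B. x B - d T y B \<in> span (v ` A))"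
  using assms by (intro exI[of _ "\<lambda>B. 0"]) (simp add: chains_zero d_zero)

lemma exact_trivial:
  assumes "finite T" "k \<le> 0 \<or> k > int (card T)"
  shows "exact_at A T k"
  unfolding exact_at_def
proof (intro allI impI)
  fix x assume x: "chains A T k x \<and> (\<forall>C. d T x C \<in> span (v ` A))"
  have "x B \<in> span (v ` A)" for B
  proof (cases "x B = 0")
    case True then show ?thesis by (simp add: span_zero)
  next
    case False
    then have B: "B \<subseteq> T" "int (card B) = k" using x chainsD by blast+
    have "card B \<le> card T" using B(1) assms(1) card_mono by blast
    then have "B = {}" using B assms finite_subset[OF B(1)] by auto
    then show ?thesis using chainsD(1)[of A T k x B] x by (simp add: P_def)
  qed
  then show "\<exists>y. chains A T (k - 1) y \<and> (\<forall>B. x B - d T y B \<in> span (v ` A))"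
    by (rule exact_if_Z)
qed

lemma hm_in: "subspace V \<Longrightarrow> (\<And>B. u B \<in> V) \<Longrightarrow> hm e u B \<in> V"
  by (simp add: hm_def subspace_scale subspace_0)

lemma hm_support:
  assumes "finite T" "\<And>B. u B \<noteq> 0 \<Longrightarrow> B \<subseteq> T \<and> int (card B) = k" "hm e u B \<noteq> 0"
  shows "B \<subseteq> T \<and> int (card B) = k - 1"
proof -
  have eB: "e \<notin> B" "u (insert e B) \<noteq> 0" using assms(3) by (auto simp: hm_def split: if_splits)
  then have iB: "insert e B \<subseteq> T" "int (card (insert e B)) = k" using assms(2) by blast+
  then have BT: "B \<subseteq> T" by blast
  have "finite B" using finite_subset[OF BT assms(1)] .
  then show ?thesis using eB iB BT by simp
qed

lemma exact_loop:
  assumes "finite T" "T \<subseteq> S0" "a \<in> T" "v a \<in> span (v ` A)"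
  shows "exact_at A T k"
  unfolding exact_at_def
proof (intro allI impI)
  fix x assume x: "chains A T k x \<and> (\<forall>C. d T x C \<in> span (v ` A))"
  define y where "y = hm a x"
  have "chains A T (k - 1) y"
  proof (rule chainsI)
    fix B
    show "y B \<in> P A B"
    proof (cases "a \<in> B")
      case True then show ?thesis by (simp add: y_def hm_def P_def span_zero)
    next
      case False
      have "P A (insert a B) = span (insert (v a) (v ` (A \<union> B)))" by (simp add: P_def)
      also have "\<dots> = P A B" unfolding P_def
        using assms(4) span_mono[of "v ` A" "v ` (A \<union> B)"]
        by (intro span_redundant) auto
      finally show ?thesis using chainsD(1)[of A T k x "insert a B"] x False
        by (simp add: y_def hm_def span_scale P_def)
    qed
  next
    fix B assume "y B \<noteq> 0"
    then show "B \<subseteq> T \<and> int (card B) = k - 1"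
      using hm_support[OF assms(1), of x k a B] x chainsD unfolding y_def by blast
  qed
  moreover have "x B - d T y B \<in> span (v ` A)" for B
  proof -
    have "d T y B + hm a (d T x) B = x B"
      unfolding y_def using homotopy[OF assms(1-3)] x chainsD(2) by blast
    then have "x B - d T y B = hm a (d T x) B" by (simp add: algebra_simps)
    also have "\<dots> \<in> span (v ` A)" using x by (intro hm_in) auto
    finally show ?thesis .
  qed
  ultimately show "\<exists>y. chains A T (k - 1) y \<and> (\<forall>B. x B - d T y B \<in> span (v ` A))" by blast
qed

end



context cx begin

lemma span_singleton_mem: "u \<in> span {w} \<Longrightarrow> \<exists>s. u = sc s w"
  by (simp add: span_singleton) blast

lemma exact_coloop:
  assumes "finite T" "T \<subseteq> S0" "a \<in> T" "c0 \<in> T" "c0 \<noteq> a"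
    and nspan: "v a \<notin> span (v ` (A \<union> (T - {a})))"
  shows "exact_at A T k"
  unfolding exact_at_def
proof (intro allI impI)
  fix x assume x: "chains A T k x \<and> (\<forall>C. d T x C \<in> span (v ` A))"
  define Q where "Q B = span (v ` (A \<union> (B - {a})))" for B
  define t where "t B = (SOME t. x B - sc t (v a) \<in> Q B)" for B
  define x2 where "x2 B = (if a \<in> B \<and> x B \<noteq> 0 then sc (t B) (v a) else 0)" for B
  define x1 where "x1 B = x B - x2 B" for B
  define M where "M = span (v ` (A \<union> (T - {a})))"
  have x1Q: "x1 B \<in> Q B" for B
  proof (cases "a \<in> B \<and> x B \<noteq> 0")
    case True
    have "A \<union> B = insert a (A \<union> (B - {a}))" using True by auto
    then have "x B \<in> span (insert (v a) (v ` (A \<union> (B - {a}))))"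
      using chainsD(1)[of A T k x B] x by (simp add: P_def)
    then have "\<exists>t. x B - sc t (v a) \<in> Q B" unfolding Q_def using span_breakdown_eq by blast
    then have "x B - sc (t B) (v a) \<in> Q B" unfolding t_def by (rule someI_ex)
    then show ?thesis using True by (simp add: x1_def x2_def)
  next
    case False
    show ?thesis
    proof (cases "x B = 0")
      case True then show ?thesis using False by (simp add: x1_def x2_def Q_def span_zero)
    next
      case False2: False
      then have "a \<notin> B" using False by blast
      then have "B - {a} = B" by simp
      moreover have "x2 B = 0" using False unfolding x2_def by auto
      ultimately show ?thesis using chainsD(1)[of A T k x B] x
        by (simp add: x1_def Q_def P_def)
    qed
  qed
  have x2z: "x B = 0 \<Longrightarrow> x2 B = 0" for B by (simp add: x2_def)
  have x1z: "x B = 0 \<Longrightarrow> x1 B = 0" for B by (simp add: x1_def x2_def)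
  have x1M: "x1 B \<in> M" for B
  proof (cases "x B = 0")
    case True then show ?thesis by (simp add: x1z M_def span_zero)
  next
    case False
    then have "B \<subseteq> T" using x chainsD(2) by blast
    then have "Q B \<subseteq> M" unfolding Q_def M_def by (intro span_mono) auto
    then show ?thesis using x1Q by blast
  qed
  have x2a: "x2 B \<in> span {v a}" for B
    by (simp add: x2_def span_zero span_scale span_base)
  have dsplit: "d T x C = d T x1 C + d T x2 C" for C
  proof -
    have "x = (\<lambda>B. x1 B + x2 B)" by (simp add: x1_def fun_eq_iff)
    then show ?thesis using d_add by metis
  qed
  have dx2: "d T x2 C = 0" for C
  proof -
    have "d T x2 C \<in> span {v a}" by (rule d_sub[OF subspace_span x2a])
    then obtain s where s: "d T x2 C = sc s (v a)" using span_singleton_mem by blast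
    have "d T x1 C \<in> M" by (rule d_sub) (auto simp: M_def x1M[unfolded M_def])
    moreover have "d T x C \<in> M"
      using x span_mono[of "v ` A" "v ` (A \<union> (T - {a}))"] unfolding M_def by blast
    ultimately have "d T x C - d T x1 C \<in> M" by (simp add: M_def span_diff)
    then have "sc s (v a) \<in> M" using dsplit s by (simp add: algebra_simps)
    then have sM: "sc s (v a) \<in> M" .
    have "s = 0"
    proof (rule ccontr)
      assume "s \<noteq> 0"
      then have "v a = sc (inverse s) (sc s (v a))" by simp
      also have "\<dots> \<in> M" using sM unfolding M_def by (rule span_scale)
      finally show False using nspan M_def by simp
    qed
    then show ?thesis using s by simp
  qed
  have dx1: "d T x1 C = d T x C" for C using dsplit[of C] dx2[of C] by simp
  have x1s: "x1 B \<noteq> 0 \<Longrightarrow> B \<subseteq> T \<and> int (card B) = k" for B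
    using x1z x chainsD(2,3) by blast
  have x2s: "x2 B \<noteq> 0 \<Longrightarrow> B \<subseteq> T \<and> int (card B) = k" for B
    using x2z x chainsD(2,3) by blast
  define y where "y B = hm a x1 B + hm c0 x2 B" for B
  have c1: "chains A T (k - 1) (hm a x1)"
  proof (rule chainsI)
    fix B
    show "hm a x1 B \<in> P A B"
    proof (cases "a \<in> B")
      case True then show ?thesis by (simp add: hm_def P_def span_zero)
    next
      case False
      then have "insert a B - {a} = B" by auto
      then have "x1 (insert a B) \<in> P A B" using x1Q[of "insert a B"] by (simp add: Q_def P_def)
      then show ?thesis using False by (simp add: hm_def P_def span_scale)
    qed
  next
    fix B assume "hm a x1 B \<noteq> 0"
    then show "B \<subseteq> T \<and> int (card B) = k - 1" using hm_support[OF assms(1) x1s] by blast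
  qed
  have c2: "chains A T (k - 1) (hm c0 x2)"
  proof (rule chainsI)
    fix B
    show "hm c0 x2 B \<in> P A B"
    proof (cases "c0 \<notin> B \<and> a \<in> B")
      case True
      then have "v a \<in> P A B" unfolding P_def by (intro span_base) auto
      then show ?thesis by (simp add: hm_def x2_def span_zero P_def span_scale)
    next
      case False
      then have "hm c0 x2 B = 0" using assms(5) by (auto simp: hm_def x2_def)
      then show ?thesis by (simp add: P_def span_zero)
    qed
  next
    fix B assume "hm c0 x2 B \<noteq> 0"
    then show "B \<subseteq> T \<and> int (card B) = k - 1" using hm_support[OF assms(1) x2s] by blast
  qed
  have cy: "chains A T (k - 1) y" unfolding y_def by (rule chains_add[OF c1 c2])
  have "x B - d T y B \<in> span (v ` A)" for B
  proof -
    have h1: "d T (hm a x1) B + hm a (d T x1) B = x1 B"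
      using homotopy[OF assms(1,2,3)] x1s by blast
    have h2: "d T (hm c0 x2) B + hm c0 (d T x2) B = x2 B"
      using homotopy[OF assms(1,2,4)] x2s by blast
    have dy: "d T y B = d T (hm a x1) B + d T (hm c0 x2) B"
      unfolding y_def by (rule d_add)
    have "x B = x1 B + x2 B" by (simp add: x1_def)
    then have "x B - d T y B = hm a (d T x1) B + hm c0 (d T x2) B"
      using h1 h2 dy by (simp add: algebra_simps)
    also have "hm c0 (d T x2) B = 0" by (simp add: hm_def dx2)
    finally have e: "x B - d T y B = hm a (d T x1) B" by simp
    have "hm a (d T x1) B \<in> span (v ` A)"
      using x by (intro hm_in) (auto simp: dx1)
    then show ?thesis using e by simp
  qed
  then show "\<exists>y. chains A T (k - 1) y \<and> (\<forall>B. x B - d T y B \<in> span (v ` A))"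
    using cy by blast
qed

end



context cx begin

lemma shift_d:
  assumes "finite T" "T \<subseteq> S0" "a \<in> T" "\<forall>c\<in>T. \<not> lt a c" "C \<subseteq> T - {a}" "u C = 0"
  shows "d (T - {a}) (\<lambda>B. if a \<notin> B then u (insert a B) else 0) C = d T u (insert a C)"
proof -
  have aC: "a \<notin> C" using assms(5) by blast
  have fC: "finite C" using assms(1,5) finite_subset by blast
  have iT: "insert a C \<subseteq> T" using assms(3,5) by blast
  have "d T u (insert a C) = (\<Sum>c\<in>insert a C. sc (sg c (insert a C - {c})) (u (insert a C - {c})))"
    using iT by (simp add: d_in)
  also have "\<dots> = sc (sg a (insert a C - {a})) (u (insert a C - {a}))
      + (\<Sum>c\<in>C. sc (sg c (insert a C - {c})) (u (insert a C - {c})))"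
    using aC fC by (simp add: sum.insert)
  also have "insert a C - {a} = C" using aC by simp
  also have "(\<Sum>c\<in>C. sc (sg c (insert a C - {c})) (u (insert a C - {c})))
      = (\<Sum>c\<in>C. sc (sg c (C - {c})) (u (insert a (C - {c}))))"
  proof (rule sum.cong[OF refl])
    fix c assume c: "c \<in> C"
    have e1: "insert a C - {c} = insert a (C - {c})" using c aC by auto
    have ca: "a \<noteq> c" using c aC by auto
    have "\<not> lt a c" using assms(4) c assms(5) by blast
    then have "sg c (insert a (C - {c})) = sg c (C - {c})"
      using sg_insert[of "C - {c}" a c] fC aC ca by simp
    then show "sc (sg c (insert a C - {c})) (u (insert a C - {c})) = sc (sg c (C - {c})) (u (insert a (C - {c})))"
      using e1 by simp
  qed
  finally have r: "d T u (insert a C) = (\<Sum>c\<in>C. sc (sg c (C - {c})) (u (insert a (C - {c}))))"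
    using assms(6) by simp
  have "d (T - {a}) (\<lambda>B. if a \<notin> B then u (insert a B) else 0) C
      = (\<Sum>c\<in>C. sc (sg c (C - {c})) (if a \<notin> C - {c} then u (insert a (C - {c})) else 0))"
    using assms(5) by (simp add: d_in)
  also have "\<dots> = (\<Sum>c\<in>C. sc (sg c (C - {c})) (u (insert a (C - {c}))))"
    using aC by simp
  finally show ?thesis using r by simp
qed


lemma d_restrict:
  assumes "C \<subseteq> T'" "T' \<subseteq> T" "\<And>B. B \<subseteq> C \<Longrightarrow> x B = x' B"
  shows "d T' x C = d T x' C"
proof -
  have "C \<subseteq> T" using assms(1,2) by blast
  then show ?thesis using assms(1,3) by (simp add: d_in)
qed

lemma chains_d':
  assumes "finite T" "chains A T (k - 1) y"
  shows "chains A T k (d T y)"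
  using chains_d[OF assms] by simp

lemma exact_generic:
  assumes fT: "finite T" and TS: "T \<subseteq> S0" and aT: "a \<in> T" and amax: "\<forall>c\<in>T. \<not> lt a c"
    and c0: "c0 \<in> T" "c0 \<noteq> a"
    and IH1: "exact_at A (T - {a}) k"
    and IH2: "exact_at (insert a A) (T - {a}) (k - 1)"
  shows "exact_at A T k"
  unfolding exact_at_def
proof (intro allI impI)
  fix x assume x: "chains A T k x \<and> (\<forall>C. d T x C \<in> span (v ` A))"
  define T' where "T' = T - {a}"
  define Z where "Z = span (v ` A)"
  define Z' where "Z' = span (v ` (insert a A))"
  have ZZ': "Z \<subseteq> Z'" unfolding Z_def Z'_def by (intro span_mono) auto
  have fT': "finite T'" "T' \<subseteq> T" using fT by (auto simp: T'_def)
  have xc: "chains A T k x" and xcyc: "\<And>C. d T x C \<in> Z" using x by (auto simp: Z_def)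
  define q where "q B = (if a \<in> B then 0 else x B)" for B
  have qc: "chains A T' k q"
  proof (rule chainsI)
    fix B show "q B \<in> P A B" using chainsD(1)[OF xc] by (simp add: q_def P_def span_zero)
  next
    fix B assume "q B \<noteq> 0"
    then show "B \<subseteq> T' \<and> int (card B) = k" using chainsD(2,3)[OF xc] by (auto simp: q_def T'_def split: if_splits)
  qed
  have qcyc: "d T' q C \<in> span (v ` A)" for C
  proof (cases "C \<subseteq> T'")
    case False then show ?thesis by (simp add: d_out span_zero)
  next
    case True
    have "d T' q C = d T x C"
      by (rule d_restrict[OF True fT'(2)]) (use True in \<open>auto simp: q_def T'_def\<close>)
    then show ?thesis using xcyc Z_def by simp
  qed
  obtain y1 where y1: "chains A T' (k - 1) y1" "\<And>B. q B - d T' y1 B \<in> Z"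
    using IH1 qc qcyc unfolding exact_at_def T'_def Z_def by blast
  have y1T: "chains A T (k - 1) y1" using chains_mono[OF y1(1) fT'(2)] .
  define x1 where "x1 B = x B - d T y1 B" for B
  have x1c: "chains A T k x1"
    unfolding x1_def using chains_diff[OF xc chains_d'[OF fT y1T]] by simp
  have x1cyc: "d T x1 C \<in> Z" for C
    unfolding x1_def using xcyc[of C] d_diff[of T x "d T y1" C] d_d[OF fT TS] by simp
  have x1na: "a \<notin> B \<Longrightarrow> x1 B \<in> Z" for B
  proof (cases "B \<subseteq> T")
    case False
    then have "x B = 0" using chainsD(2)[OF xc] by blast
    then show ?thesis using False by (simp add: x1_def d_out Z_def span_zero)
  next
    case True
    assume aB: "a \<notin> B"
    then have BT': "B \<subseteq> T'" using True by (auto simp: T'_def)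
    have "d T y1 B = d T' y1 B" using d_restrict[OF BT' fT'(2), of y1 y1] by simp
    then show ?thesis using y1(2)[of B] aB by (simp add: x1_def q_def)
  qed
  define p1 where "p1 B = (if a \<in> B then x1 B else 0)" for B
  define r where "r B = x1 B - p1 B" for B
  have rZ: "r B \<in> Z" for B using x1na[of B] by (simp add: r_def p1_def Z_def span_zero)
  have p1c: "chains A T k p1"
  proof (rule chainsI)
    fix B show "p1 B \<in> P A B" using chainsD(1)[OF x1c] by (simp add: p1_def P_def span_zero)
  next
    fix B assume "p1 B \<noteq> 0"
    then show "B \<subseteq> T \<and> int (card B) = k" using chainsD(2,3)[OF x1c] by (auto simp: p1_def split: if_splits)
  qed
  have p1cyc: "d T p1 C \<in> Z" for C
  proof -
    have "p1 = (\<lambda>B. x1 B - r B)" by (simp add: r_def fun_eq_iff)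
    then have "d T p1 C = d T x1 C - d T r C" using d_diff by metis
    moreover have "d T r C \<in> Z" unfolding Z_def by (rule d_sub[OF subspace_span]) (use rZ Z_def in auto)
    ultimately show ?thesis using x1cyc[of C] by (simp add: Z_def span_diff)
  qed
  define g where "g B = (if a \<notin> B then p1 (insert a B) else 0)" for B
  have gc: "chains (insert a A) T' (k - 1) g"
  proof (rule chainsI)
    fix B
    show "g B \<in> P (insert a A) B"
    proof (cases "a \<in> B")
      case True then show ?thesis by (simp add: g_def P_def span_zero)
    next
      case False
      have "A \<union> insert a B = insert a A \<union> B" by auto
      then show ?thesis using chainsD(1)[OF p1c, of "insert a B"] False by (simp add: g_def P_def)
    qed
  next
    fix B assume ne: "g B \<noteq> 0"
    then have aB: "a \<notin> B" "p1 (insert a B) \<noteq> 0" by (auto simp: g_def split: if_splits)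
    then have "insert a B \<subseteq> T" "int (card (insert a B)) = k" using chainsD(2,3)[OF p1c] by blast+
    moreover then have "finite B" using fT finite_subset by (metis insert_subset)
    ultimately show "B \<subseteq> T' \<and> int (card B) = k - 1" using aB by (auto simp: T'_def)
  qed
  have gcyc: "d T' g C \<in> span (v ` (insert a A))" for C
  proof (cases "C \<subseteq> T'")
    case False then show ?thesis by (simp add: d_out span_zero)
  next
    case True
    have "p1 C = 0" using True by (auto simp: p1_def T'_def)
    then have "d T' g C = d T p1 (insert a C)"
      unfolding g_def T'_def using shift_d[OF fT TS aT amax] True T'_def by simp
    then show ?thesis using p1cyc ZZ' Z'_def by auto
  qed
  obtain y2 where y2: "chains (insert a A) T' (k - 1 - 1) y2" "\<And>B. g B - d T' y2 B \<in> Z'"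
    using IH2 gc gcyc unfolding exact_at_def T'_def Z'_def by blast
  define yh where "yh B = (if a \<in> B then y2 (B - {a}) else 0)" for B
  have yhc: "chains A T (k - 1) yh"
  proof (rule chainsI)
    fix B
    show "yh B \<in> P A B"
    proof (cases "a \<in> B")
      case False then show ?thesis by (simp add: yh_def P_def span_zero)
    next
      case True
      have "insert a A \<union> (B - {a}) = A \<union> B" using True by auto
      then show ?thesis using chainsD(1)[OF y2(1), of "B - {a}"] True by (simp add: yh_def P_def)
    qed
  next
    fix B assume ne: "yh B \<noteq> 0"
    then have aB: "a \<in> B" "y2 (B - {a}) \<noteq> 0" by (auto simp: yh_def split: if_splits)
    then have B': "B - {a} \<subseteq> T'" "int (card (B - {a})) = k - 1 - 1" using chainsD(2,3)[OF y2(1)] by blast+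
    then have BT: "B \<subseteq> T" using aB aT by (auto simp: T'_def)
    then have fB: "finite B" using fT finite_subset by blast
    then have "card B > 0" using aB by (auto simp: card_gt_0_iff)
    moreover have "card (B - {a}) = card B - 1" using fB aB by (simp add: card_Diff_singleton)
    ultimately show "B \<subseteq> T \<and> int (card B) = k - 1" using B' BT by simp
  qed
  define x2 where "x2 B = p1 B - d T yh B" for B
  have x2c: "chains A T k x2"
    unfolding x2_def using chains_diff[OF p1c chains_d'[OF fT yhc]] by simp
  have x2cyc: "d T x2 C \<in> Z" for C
    unfolding x2_def using p1cyc[of C] d_diff[of T p1 "d T yh" C] d_d[OF fT TS] by simp
  have x2na: "a \<notin> B \<Longrightarrow> x2 B = 0" for B
  proof -
    assume aB: "a \<notin> B"
    have "d T yh B = 0"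
    proof (cases "B \<subseteq> T")
      case False then show ?thesis by (simp add: d_out)
    next
      case True then show ?thesis using aB by (simp add: d_in yh_def)
    qed
    then show ?thesis using aB by (simp add: x2_def p1_def)
  qed
  have x2Z': "x2 B \<in> Z'" for B
  proof (cases "a \<in> B")
    case False then show ?thesis using x2na by (simp add: Z'_def span_zero)
  next
    case True
    show ?thesis
    proof (cases "B \<subseteq> T")
      case False
      then have "x1 B = 0" using chainsD(2)[OF x1c] by blast
      then show ?thesis using False by (simp add: x2_def p1_def d_out Z'_def span_zero)
    next
      case BT: True
      define B' where "B' = B - {a}"
      have B: "B = insert a B'" "a \<notin> B'" "B' \<subseteq> T - {a}" using True BT by (auto simp: B'_def)
      have "yh B' = 0" using B(2) by (simp add: yh_def)
      then have sd: "d (T - {a}) (\<lambda>C. if a \<notin> C then yh (insert a C) else 0) B' = d T yh (insert a B')"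
        using shift_d[OF fT TS aT amax B(3)] by simp
      have yeq: "(\<lambda>C. if a \<notin> C then yh (insert a C) else 0) = y2"
      proof
        fix C
        show "(if a \<notin> C then yh (insert a C) else 0) = y2 C"
        proof (cases "a \<in> C")
          case True
          then have "y2 C = 0" using chainsD(2)[OF y2(1), of C] by (auto simp: T'_def)
          then show ?thesis using True by simp
        next
          case False then show ?thesis by (simp add: yh_def)
        qed
      qed
      have "x2 B = g B' - d T' y2 B'"
        using sd yeq B(1,2) by (simp add: x2_def g_def T'_def p1_def)
      then show ?thesis using y2(2) by simp
    qed
  qed
  define y3 where "y3 = hm c0 x2"
  have x2s: "x2 B \<noteq> 0 \<Longrightarrow> B \<subseteq> T \<and> int (card B) = k" for B using chainsD(2,3)[OF x2c] by blast
  have y3c: "chains A T (k - 1) y3"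
  proof (rule chainsI)
    fix B
    show "y3 B \<in> P A B"
    proof (cases "c0 \<notin> B \<and> a \<in> B")
      case True
      have "Z' \<subseteq> P A B" unfolding Z'_def P_def using True by (intro span_mono) auto
      then show ?thesis using x2Z' True by (simp add: y3_def hm_def P_def span_scale subset_iff)
    next
      case False
      then have "y3 B = 0" using c0(2) x2na by (auto simp: y3_def hm_def)
      then show ?thesis by (simp add: P_def span_zero)
    qed
  next
    fix B assume "y3 B \<noteq> 0"
    then show "B \<subseteq> T \<and> int (card B) = k - 1" using hm_support[OF fT x2s] unfolding y3_def by blast
  qed
  define y where "y B = y1 B + yh B + y3 B" for B
  have yc: "chains A T (k - 1) y"
    unfolding y_def using chains_add[OF chains_add[OF y1T yhc] y3c] by simp
  have "x B - d T y B \<in> Z" for B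
  proof -
    have dy: "d T y B = d T y1 B + d T yh B + d T y3 B"
      unfolding y_def using d_add[of T "\<lambda>B. y1 B + yh B" y3 B] d_add[of T y1 yh B] by simp
    have h: "d T y3 B + hm c0 (d T x2) B = x2 B"
      unfolding y3_def using homotopy[OF fT TS c0(1)] x2s by blast
    have "x B - d T y B = r B + hm c0 (d T x2) B"
      using dy h by (simp add: x1_def r_def x2_def algebra_simps)
    moreover have "hm c0 (d T x2) B \<in> Z"
      unfolding Z_def by (rule hm_in[OF subspace_span]) (use x2cyc Z_def in auto)
    ultimately show ?thesis using rZ[of B] by (simp add: Z_def span_add)
  qed
  then show "\<exists>y. chains A T (k - 1) y \<and> (\<forall>B. x B - d T y B \<in> span (v ` A))"
    using yc Z_def by blast
qed

end



context cx begin

lemma main_exact: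
  assumes "finite T" "T \<subseteq> S0" "finite A" "k \<noteq> int (rk A T)"
  shows "exact_at A T k"
  using assms
proof (induction "card T" arbitrary: T A k rule: less_induct)
  case less
  show ?case
  proof (cases "T = {}")
    case True
    then show ?thesis using exact_trivial[OF less.prems(1)] by force
  next
    case False
    obtain a where a: "a \<in> T" "\<forall>c\<in>T. \<not> lt a c" using exists_max[OF less.prems(1) False] by blast
    define T' where "T' = T - {a}"
    have fG: "finite (v ` (A \<union> T'))" "finite (v ` A)" using less.prems(1,3) by (auto simp: T'_def)
    have AT: "A \<union> T = insert a (A \<union> T')" using a by (auto simp: T'_def)
    show ?thesis
    proof (cases "v a \<in> span (v ` A)")
      case True then show ?thesis using exact_loop[OF less.prems(1,2) a(1)] by blast
    next
      case notloop: False
      show ?thesis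
      proof (cases "v a \<in> span (v ` (A \<union> T'))")
        case False
        show ?thesis
        proof (cases "T' = {}")
          case True
          then have T1: "T = {a}" using a by (auto simp: T'_def)
          have "dim (v ` (A \<union> T)) = dim (v ` A) + 1"
            using dim_insert_gen[OF fG(2) span_superset, of "v a"] notloop T1 by simp
          then have "rk A T = 1" by (simp add: rk_def)
          then have "k \<le> 0 \<or> k > int (card T)" using less.prems(4) T1 by auto
          then show ?thesis using exact_trivial[OF less.prems(1)] by blast
        next
          case False2: False
          then obtain c0 where "c0 \<in> T'" by blast
          then show ?thesis using exact_coloop[OF less.prems(1,2) a(1), of c0] False by (auto simp: T'_def)
        qed
      next
        case True
        have T'ne: "T' \<noteq> {}" using True notloop by auto
        then obtain c0 where c0: "c0 \<in> T'" by blast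
        have cardT': "card T' < card T" unfolding T'_def using card_Diff1_less[OF less.prems(1) a(1)] .
        have fT': "finite T'" "T' \<subseteq> S0" using less.prems(1,2) by (auto simp: T'_def)
        have d1: "dim (v ` (A \<union> T)) = dim (v ` (A \<union> T'))"
          using dim_insert_gen[OF fG(1) span_superset, of "v a"] True AT by simp
        have d2: "dim (v ` (insert a A)) = dim (v ` A) + 1"
          using dim_insert_gen[OF fG(2) span_superset, of "v a"] notloop by simp
        have d3: "dim (v ` (insert a A)) \<le> dim (v ` (A \<union> T))"
          using dim_mono_gen[of "v ` (insert a A)" "v ` (A \<union> T)"] less.prems(1,3) a(1)
          by (auto intro: span_base)
        have iA: "insert a A \<union> T' = A \<union> T" using a by (auto simp: T'_def)
        have r1: "rk A T' = rk A T" using d1 by (simp add: rk_def)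
        have r2: "int (rk (insert a A) T') = int (rk A T) - 1"
          using d1 d2 d3 iA by (simp add: rk_def)
        have IH1: "exact_at A T' k"
          using less.hyps[OF cardT' fT' less.prems(3)] less.prems(4) r1 by simp
        have IH2: "exact_at (insert a A) T' (k - 1)"
          using less.hyps[OF cardT' fT'] less.prems(3,4) r2 by simp
        show ?thesis
          using exact_generic[OF less.prems(1,2) a, of c0 A k] c0 IH1 IH2 by (auto simp: T'_def)
      qed
    qed
  qed
qed

end



lemma vs_scU: "vector_space (scU :: 'k::field \<Rightarrow> ('a \<Rightarrow> 'k) \<Rightarrow> _)"
  unfolding vector_space_def scU_def by (auto simp: fun_eq_iff algebra_simps)

context cx begin

sublocale C: vector_space "scC sc"
  unfolding vector_space_def scC_def by (auto simp: fun_eq_iff scale_right_distrib scale_left_distrib)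

lemma lin_d: "Vector_Spaces.linear (scC sc) (scC sc) (d T)"
  unfolding Vector_Spaces.linear_iff
proof (intro conjI allI)
  show "vector_space (scC sc)" by (rule C.vector_space_axioms)
  show "vector_space (scC sc)" by (rule C.vector_space_axioms)
  fix x y :: "'a set \<Rightarrow> 'w"
  show "d T (x + y) = d T x + d T y"
    using d_add[of T x y] by (simp add: fun_eq_iff plus_fun_def)
next
  fix c and x :: "'a set \<Rightarrow> 'w"
  show "d T (scC sc c x) = scC sc c (d T x)"
    using d_scale[of T c x] by (simp add: fun_eq_iff scC_def)
qed

lemma lin_upd: "Vector_Spaces.linear (scC sc) (scC sc) (\<lambda>x. x(B0 := 0))"
  unfolding Vector_Spaces.linear_iff
  by (auto simp: C.vector_space_axioms fun_eq_iff scC_def)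

lemma lin_single: "Vector_Spaces.linear sc (scC sc) (\<lambda>w B. if B = B0 then w else 0)"
  unfolding Vector_Spaces.linear_iff
  by (auto simp: C.vector_space_axioms vector_space_axioms fun_eq_iff scC_def)


definition DS :: "('a set \<Rightarrow> 'w set) \<Rightarrow> 'a set set \<Rightarrow> ('a set \<Rightarrow> 'w) set" where
  "DS W F = {x. (\<forall>B. x B \<in> W B) \<and> (\<forall>B. x B \<noteq> 0 \<longrightarrow> B \<in> F)}"

lemma DS_subspace:
  assumes "\<And>B. subspace (W B)"
  shows "C.subspace (DS W F)"
  unfolding C.subspace_def
proof (intro conjI ballI allI)
  show "0 \<in> DS W F" using assms subspace_0 by (simp add: DS_def)
next
  fix x y assume "x \<in> DS W F" "y \<in> DS W F"
  then have x: "\<forall>B. x B \<in> W B" "\<forall>B. x B \<noteq> 0 \<longrightarrow> B \<in> F"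
    and y: "\<forall>B. y B \<in> W B" "\<forall>B. y B \<noteq> 0 \<longrightarrow> B \<in> F" by (auto simp: DS_def)
  have "x B + y B \<in> W B" for B using x y assms subspace_add by blast
  moreover have "x B + y B \<noteq> 0 \<Longrightarrow> B \<in> F" for B using x y by (metis add.right_neutral)
  ultimately show "x + y \<in> DS W F" by (simp add: DS_def)
next
  fix c x assume "x \<in> DS W F"
  then have x: "\<forall>B. x B \<in> W B" "\<forall>B. x B \<noteq> 0 \<longrightarrow> B \<in> F" by (auto simp: DS_def)
  show "scC sc c x \<in> DS W F" using x assms subspace_scale by (auto simp: scC_def DS_def)
qed

lemma lin_rn:
  assumes "Vector_Spaces.linear s1 s2 f" "module.subspace s1 V" "V \<subseteq> module.span s1 G" "finite G"
  shows "vector_space.dim s1 V = vector_space.dim s1 {x \<in> V. f x = 0} + vector_space.dim s2 (f ` V)"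
  using linear.rank_nullity_fd[OF assms] .


lemma DS_dim:
  assumes "finite F" "\<And>B. W B = span (G B)" "\<And>B. B \<in> F \<Longrightarrow> finite (G B)"
  shows "(\<exists>X. finite X \<and> DS W F \<subseteq> C.span X) \<and> C.dim (DS W F) = (\<Sum>B\<in>F. dim (W B))"
  using assms(1,3)
proof (induction F rule: finite_induct)
  case empty
  have "DS W {} = {0}" by (auto simp: DS_def fun_eq_iff assms(2) span_zero)
  then show ?case using C.dim_zero_set by auto
next
  case (insert B0 F)
  define single where "single w = (\<lambda>B. if B = B0 then w else (0::'w))" for w
  have subW: "subspace (W B)" for B using assms(2) by simp
  have subD': "C.subspace (DS W (insert B0 F))" by (rule DS_subspace[OF subW])
  have IH: "(\<exists>X. finite X \<and> DS W F \<subseteq> C.span X) \<and> C.dim (DS W F) = (\<Sum>B\<in>F. dim (W B))"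
    using insert.IH insert.prems by blast
  have fG0: "finite (G B0)" using insert.prems by blast
  obtain X where X: "finite X" "DS W F \<subseteq> C.span X" using IH by blast
  have mh: "module_hom sc (scC sc) single"
    using lin_single[of B0] module_hom_iff_linear unfolding single_def by blast
  have spim: "C.span (single ` G B0) = single ` span (G B0)"
    using module_hom.span_image[OF mh] .
  have dec: "x = x(B0 := 0) + single (x B0)" for x :: "'a set \<Rightarrow> 'w"
    by (simp add: fun_eq_iff single_def)
  have updD: "x(B0 := 0) \<in> DS W F" if "x \<in> DS W (insert B0 F)" for x
    using that subW subspace_0 by (auto simp: DS_def)
  define X' where "X' = X \<union> single ` G B0"
  have fX': "finite X'" using X(1) fG0 by (simp add: X'_def)
  have DX': "DS W (insert B0 F) \<subseteq> C.span X'"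
  proof
    fix x assume x: "x \<in> DS W (insert B0 F)"
    have "x(B0 := 0) \<in> C.span X'" using updD[OF x] X(2) C.span_mono[of X X'] X'_def by blast
    moreover have "single (x B0) \<in> C.span X'"
    proof -
      have "x B0 \<in> span (G B0)" using x assms(2) by (auto simp: DS_def)
      then have "single (x B0) \<in> C.span (single ` G B0)" using spim by blast
      then show ?thesis using C.span_mono[of "single ` G B0" X'] X'_def by blast
    qed
    ultimately show "x \<in> C.span X'" using dec[of x] C.span_add by metis
  qed
  have ker: "{x \<in> DS W (insert B0 F). x(B0 := 0) = 0} = single ` W B0"
  proof
    show "{x \<in> DS W (insert B0 F). x(B0 := 0) = 0} \<subseteq> single ` W B0"
    proof
      fix x assume "x \<in> {x \<in> DS W (insert B0 F). x(B0 := 0) = 0}"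
      then have x: "x \<in> DS W (insert B0 F)" "x(B0 := 0) = 0" by auto
      then have "x = single (x B0)" using dec[of x] by simp
      moreover have "x B0 \<in> W B0" using x by (auto simp: DS_def)
      ultimately show "x \<in> single ` W B0" by blast
    qed
    show "single ` W B0 \<subseteq> {x \<in> DS W (insert B0 F). x(B0 := 0) = 0}"
    proof
      fix x assume "x \<in> single ` W B0"
      then obtain w where w: "w \<in> W B0" "x = single w" by blast
      have "x \<in> DS W (insert B0 F)" unfolding DS_def w(2) single_def
        using w(1) subW subspace_0 by auto
      moreover have "x(B0 := 0) = 0" unfolding w(2) single_def by (rule ext) simp
      ultimately show "x \<in> {x \<in> DS W (insert B0 F). x(B0 := 0) = 0}" by blast
    qed
  qed
  have img: "(\<lambda>x. x(B0 := 0)) ` DS W (insert B0 F) = DS W F"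
  proof
    show "(\<lambda>x. x(B0 := 0)) ` DS W (insert B0 F) \<subseteq> DS W F" using updD by blast
    show "DS W F \<subseteq> (\<lambda>x. x(B0 := 0)) ` DS W (insert B0 F)"
    proof
      fix x assume x: "x \<in> DS W F"
      then have "x B0 = 0" using insert.hyps(2) by (auto simp: DS_def)
      then have "x = x(B0 := 0)" by (simp add: fun_eq_iff)
      moreover have "x \<in> DS W (insert B0 F)" using x by (auto simp: DS_def)
      ultimately show "x \<in> (\<lambda>x. x(B0 := 0)) ` DS W (insert B0 F)" by blast
    qed
  qed
  have rn1: "C.dim (DS W (insert B0 F)) = C.dim (single ` W B0) + C.dim (DS W F)"
    using lin_rn[OF lin_upd[of B0] subD' DX' fX'] ker img by simp
  have ker2: "{w \<in> W B0. single w = 0} = {0}"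
    using subW subspace_0 by (auto simp: single_def fun_eq_iff)
  have rn2: "dim (W B0) = C.dim (single ` W B0)"
    using lin_rn[OF lin_single[of B0], of "W B0" "G B0"] ker2 subW assms(2) fG0 dim_zero_set
    unfolding single_def by simp
  show ?case using rn1 rn2 IH insert.hyps DX' fX' by auto
qed

end



lemma telescope_alt:
  fixes a :: "nat \<Rightarrow> int"
  shows "(\<Sum>j<m. (-1)^j * (a j + a (Suc j))) = a 0 - (-1)^m * a m"
  by (induction m) (auto simp: algebra_simps)

context cx begin

lemma Ch_DS: "{x. chains {} S0 k x} = DS (\<lambda>B. span (v ` B)) {B. B \<subseteq> S0 \<and> int (card B) = k}"
  by (auto simp: chains_def DS_def P_def)

lemma Ch_props:
  "C.subspace {x. chains {} S0 k x}"
  "\<exists>X. finite X \<and> {x. chains {} S0 k x} \<subseteq> C.span X"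
  "C.dim {x. chains {} S0 k x} = (\<Sum>B\<in>{B. B \<subseteq> S0 \<and> int (card B) = k}. dim (span (v ` B)))"
proof -
  have fin: "finite {B. B \<subseteq> S0 \<and> int (card B) = k}" using finS0 by simp
  have "(\<exists>X. finite X \<and> DS (\<lambda>B. span (v ` B)) {B. B \<subseteq> S0 \<and> int (card B) = k} \<subseteq> C.span X) \<and>
     C.dim (DS (\<lambda>B. span (v ` B)) {B. B \<subseteq> S0 \<and> int (card B) = k}) = (\<Sum>B\<in>{B. B \<subseteq> S0 \<and> int (card B) = k}. dim (span (v ` B)))"
    by (rule DS_dim[OF fin, of _ "\<lambda>B. v ` B"]) (auto intro: finite_subset[OF _ finS0])
  then show "\<exists>X. finite X \<and> {x. chains {} S0 k x} \<subseteq> C.span X"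
    "C.dim {x. chains {} S0 k x} = (\<Sum>B\<in>{B. B \<subseteq> S0 \<and> int (card B) = k}. dim (span (v ` B)))"
    unfolding Ch_DS by auto
  show "C.subspace {x. chains {} S0 k x}" unfolding Ch_DS by (rule DS_subspace) simp
qed

lemma Ch_zero:
  assumes "k < 0 \<or> k > int (card S0)"
  shows "{x. chains {} S0 k x} = {0}"
proof
  show "{x. chains {} S0 k x} \<subseteq> {0}"
  proof
    fix x assume x: "x \<in> {x. chains {} S0 k x}"
    have "x B = 0" for B
    proof (rule ccontr)
      assume "x B \<noteq> 0"
      then have "B \<subseteq> S0" "int (card B) = k" using x chainsD by blast+
      moreover have "card B \<le> card S0" using \<open>B \<subseteq> S0\<close> finS0 card_mono by blast
      ultimately show False using assms by auto
    qed
    then show "x \<in> {0}" by (simp add: fun_eq_iff)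
  qed
  show "{0} \<subseteq> {x. chains {} S0 k x}" using chains_zero[of "{}" S0 k] by (simp add: zero_fun_def)
qed

lemma ker_eq_im:
  assumes "k \<noteq> int (rk {} S0)"
  shows "{x \<in> {x. chains {} S0 k x}. d S0 x = 0} = d S0 ` {x. chains {} S0 (k - 1) x}"
proof
  have ex: "exact_at {} S0 k" using main_exact[OF finS0 order_refl _ assms] by simp
  show "{x \<in> {x. chains {} S0 k x}. d S0 x = 0} \<subseteq> d S0 ` {x. chains {} S0 (k - 1) x}"
  proof
    fix x assume "x \<in> {x \<in> {x. chains {} S0 k x}. d S0 x = 0}"
    then have x: "chains {} S0 k x" "d S0 x = 0" by auto
    then have "\<forall>C. d S0 x C \<in> span (v ` {})" by (simp add: span_zero)
    then obtain y where y: "chains {} S0 (k - 1) y" "\<forall>B. x B - d S0 y B \<in> span (v ` {})"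
      using ex x unfolding exact_at_def by blast
    then have "x = d S0 y" by (simp add: fun_eq_iff)
    then show "x \<in> d S0 ` {x. chains {} S0 (k - 1) x}" using y by blast
  qed
  show "d S0 ` {x. chains {} S0 (k - 1) x} \<subseteq> {x \<in> {x. chains {} S0 k x}. d S0 x = 0}"
    using chains_d'[OF finS0] d_d_fun[OF finS0 order_refl] by (auto simp: zero_fun_def)
qed

lemma euler:
  defines "r \<equiv> rk {} S0"
  shows "int (C.dim {x \<in> {x. chains {} S0 (int r) x}. d S0 x = 0}) - int (C.dim (d S0 ` {x. chains {} S0 (int r - 1) x}))
    = (-1)^r * (\<Sum>j<Suc (card S0). (-1)^j * int (C.dim {x. chains {} S0 (int j) x}))"
proof -
  define c where "c j = int (C.dim {x. chains {} S0 (int j) x})" for j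
  define kk where "kk j = int (C.dim {x \<in> {x. chains {} S0 (int j) x}. d S0 x = 0})" for j
  define a where "a j = int (C.dim (d S0 ` {x. chains {} S0 (int j - 1) x}))" for j
  define n where "n = card S0"
  have rn: "c j = kk j + a (Suc j)" for j
  proof -
    obtain X where X: "finite X" "{x. chains {} S0 (int j) x} \<subseteq> C.span X" using Ch_props(2) by blast
    show ?thesis using lin_rn[OF lin_d[of S0] Ch_props(1) X(2,1)] unfolding c_def kk_def a_def by simp
  qed
  have ex: "j \<noteq> r \<Longrightarrow> kk j = a j" for j
    unfolding kk_def a_def using ker_eq_im[of "int j"] r_def by simp
  have a0: "a 0 = 0"
  proof -
    have "d S0 ` {x. chains {} S0 (int 0 - 1) x} = {0}" using Ch_zero[of "-1"] d_zero by (simp add: zero_fun_def)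
    then show ?thesis unfolding a_def using C.dim_zero_set by simp
  qed
  have an: "a (Suc n) = 0"
  proof -
    have sub: "d S0 ` {x. chains {} S0 (int n) x} \<subseteq> {x. chains {} S0 (int n + 1) x}"
      using chains_d[OF finS0] by blast
    have z: "{x. chains {} S0 (int n + 1) x} = {0}" using Ch_zero[of "int n + 1"] unfolding n_def by linarith
    have "(\<lambda>B. 0) \<in> {x. chains {} S0 (int n) x}" using chains_zero by blast
    then have "d S0 (\<lambda>B. 0) \<in> d S0 ` {x. chains {} S0 (int n) x}" by blast
    then have "0 \<in> d S0 ` {x. chains {} S0 (int n) x}" using d_zero by (simp add: zero_fun_def)
    then have "d S0 ` {x. chains {} S0 (int n) x} = {0}" using sub z by blast
    then show ?thesis unfolding a_def using C.dim_zero_set by simp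
  qed
  have rn': "r \<le> n"
  proof -
    have "dim (v ` S0) \<le> card (v ` S0)" using dim_le_card' finS0 by simp
    also have "\<dots> \<le> card S0" using card_image_le finS0 by blast
    finally show ?thesis by (simp add: r_def rk_def n_def)
  qed
  have ckk: "kk j = a j + (if j = r then kk r - a r else 0)" for j using ex[of j] by auto
  have "(\<Sum>j<Suc n. (-1)^j * c j) = (\<Sum>j<Suc n. (-1)^j * (a j + a (Suc j)) + (if j = r then (-1)^r * (kk r - a r) else 0))"
  proof (intro sum.cong refl)
    fix j
    show "(-1)^j * c j = (-1)^j * (a j + a (Suc j)) + (if j = r then (-1)^r * (kk r - a r) else 0)"
      using rn[of j] ckk[of j] by (cases "j = r") (simp_all add: algebra_simps)
  qed
  also have "\<dots> = (\<Sum>j<Suc n. (-1)^j * (a j + a (Suc j))) + (-1)^r * (kk r - a r)"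
    using rn' by (simp add: sum.distrib)
  also have "(\<Sum>j<Suc n. (-1)^j * (a j + a (Suc j))) = 0"
    using telescope_alt[of a "Suc n"] a0 an by simp
  finally have "(\<Sum>j<Suc n. (-1)^j * c j) = (-1)^r * (kk r - a r)" by simp
  then have "(-1)^r * (\<Sum>j<Suc n. (-1)^j * c j) = kk r - a r"
    by (simp flip: power_add mult.assoc add: power_mult[symmetric])
  then show ?thesis unfolding c_def kk_def a_def n_def by simp
qed

end



lemma US_subspace: "module.subspace (scU :: 'k::field \<Rightarrow> ('a \<Rightarrow> 'k) \<Rightarrow> _) (U_S S)"
proof -
  interpret U: vector_space "scU :: 'k \<Rightarrow> ('a \<Rightarrow> 'k) \<Rightarrow> _" by (rule vs_scU)
  show ?thesis unfolding U.subspace_def by (auto simp: U_S_def scU_def)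
qed

lemma phi_zero:
  fixes phi :: "('a \<Rightarrow> 'k::field) \<Rightarrow> 'w::ab_group_add" and S :: "'a set"
  assumes "linear_on_US sc S phi"
  shows "phi 0 = 0"
proof -
  have "(0 :: 'a \<Rightarrow> 'k) \<in> U_S S" by (simp add: U_S_def)
  then have "phi (0 + 0) = phi 0 + phi 0" using assms unfolding linear_on_US_def by blast
  then show ?thesis by simp
qed

lemma VB_span:
  fixes sc :: "'k::field \<Rightarrow> 'w::ab_group_add \<Rightarrow> 'w" and phi :: "('a \<Rightarrow> 'k) \<Rightarrow> 'w"
  assumes vs: "vector_space sc" and lin: "linear_on_US sc S phi" and BS: "B \<subseteq> S"
  shows "VB sc phi B = module.span sc ((\<lambda>a. phi (eU a)) ` B)"
proof -
  interpret U: vector_space "scU :: 'k \<Rightarrow> ('a \<Rightarrow> 'k) \<Rightarrow> _" by (rule vs_scU)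
  interpret W: vector_space sc by (rule vs)
  let ?U = "U.span (eU ` B)"
  have eUS: "eU ` B \<subseteq> U_S S" using BS by (auto simp: U_S_def eU_def)
  have usub: "U.subspace (U_S S)" using US_subspace .
  have UUS: "?U \<subseteq> U_S S" by (rule U.span_minimal[OF eUS usub])
  have add: "phi (u + w) = phi u + phi w" if "u \<in> U_S S" "w \<in> U_S S" for u w
    using lin that unfolding linear_on_US_def by blast
  have scl: "phi (scU c u) = sc c (phi u)" if "u \<in> U_S S" for c u
    using lin that unfolding linear_on_US_def by blast
  have p0: "phi 0 = 0" by (rule phi_zero[OF lin])
  have s1: "phi ` ?U \<subseteq> W.span ((\<lambda>a. phi (eU a)) ` B)"
  proof -
    define Q where "Q = {u \<in> U_S S. phi u \<in> W.span ((\<lambda>a. phi (eU a)) ` B)}"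
    have "U.subspace Q"
      unfolding U.subspace_def Q_def
    proof (intro conjI ballI allI)
      show "0 \<in> {u \<in> U_S S. phi u \<in> W.span ((\<lambda>a. phi (eU a)) ` B)}"
        using p0 U.subspace_0[OF usub] W.span_zero by auto
    next
      fix x y assume "x \<in> {u \<in> U_S S. phi u \<in> W.span ((\<lambda>a. phi (eU a)) ` B)}"
        "y \<in> {u \<in> U_S S. phi u \<in> W.span ((\<lambda>a. phi (eU a)) ` B)}"
      then show "x + y \<in> {u \<in> U_S S. phi u \<in> W.span ((\<lambda>a. phi (eU a)) ` B)}"
        using add U.subspace_add[OF usub] W.span_add by auto
    next
      fix c x assume "x \<in> {u \<in> U_S S. phi u \<in> W.span ((\<lambda>a. phi (eU a)) ` B)}"
      then show "scU c x \<in> {u \<in> U_S S. phi u \<in> W.span ((\<lambda>a. phi (eU a)) ` B)}"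
        using scl U.subspace_scale[OF usub] W.span_scale by auto
    qed
    moreover have "eU ` B \<subseteq> Q" using eUS unfolding Q_def by (auto intro: W.span_base)
    ultimately have "?U \<subseteq> Q" by (rule U.span_minimal[rotated])
    then show ?thesis unfolding Q_def by blast
  qed
  have s2: "W.span ((\<lambda>a. phi (eU a)) ` B) \<subseteq> phi ` ?U"
  proof (rule W.span_minimal)
    show "(\<lambda>a. phi (eU a)) ` B \<subseteq> phi ` ?U" by (auto intro: U.span_base)
    show "W.subspace (phi ` ?U)"
      unfolding W.subspace_def
    proof (intro conjI ballI allI)
      show "0 \<in> phi ` ?U" using p0 U.span_zero by (metis image_eqI)
    next
      fix x y assume "x \<in> phi ` ?U" "y \<in> phi ` ?U"
      then obtain u w where uw: "u \<in> ?U" "w \<in> ?U" "x = phi u" "y = phi w" by auto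
      have "u + w \<in> ?U" using uw U.span_add by blast
      moreover have "phi (u + w) = x + y" using uw UUS add by blast
      ultimately show "x + y \<in> phi ` ?U" by (metis image_eqI)
    next
      fix c x assume "x \<in> phi ` ?U"
      then obtain u where u: "u \<in> ?U" "x = phi u" by auto
      have "scU c u \<in> ?U" using u U.span_scale by blast
      moreover have "phi (scU c u) = sc c x" using u UUS scl by blast
      ultimately show "sc c x \<in> phi ` ?U" by (metis image_eqI)
    qed
  qed
  show ?thesis unfolding VB_def using s1 s2 by blast
qed



theorem theorem3p4:
  fixes sc :: "'k::field \<Rightarrow> 'w::ab_group_add \<Rightarrow> 'w"
    and S :: "'a set"
    and phi :: "('a \<Rightarrow> 'k) \<Rightarrow> 'w"
    and om :: "'a rel"
    and i :: int
  assumes "vector_space sc"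
    and "finite S"
    and "linear_on_US sc S phi"
    and "linear_order_on S om"
  shows "homdim sc phi om S i =
           (if i = int (card S) - int (mrank sc phi S) then beta_inv sc phi S else 0)"
proof -
  define v where "v = (\<lambda>a. phi (eU a))"
  interpret cx sc om S v by (intro cx.intro cx_axioms.intro assms)
  have VBe: "VB sc phi B = span (v ` B)" if "B \<subseteq> S" for B
    using VB_span[OF assms(1,3) that] unfolding v_def by simp
  have mr: "mrank sc phi J = dim (v ` J)" if "J \<subseteq> S" for J
    using VBe[OF that] by (simp add: mrank_def)
  have VB0: "0 \<in> VB sc phi B" for B
  proof -
    interpret U: vector_space "scU :: 'k \<Rightarrow> ('a \<Rightarrow> 'k) \<Rightarrow> _" by (rule vs_scU)
    have "0 \<in> U.span (eU ` B)" by (rule U.span_zero)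
    then show ?thesis unfolding VB_def using phi_zero[OF assms(3)] by (metis image_eqI)
  qed
  have chV: "chainV sc phi S j = {x. chains {} S (int (card S) - j) x}" for j
  proof (intro set_eqI iffI)
    fix x assume "x \<in> chainV sc phi S j"
    then have x: "\<forall>B. x B \<in> VB sc phi B" "\<forall>B. x B \<noteq> 0 \<longrightarrow> B \<subseteq> S \<and> B \<noteq> {} \<and> int (card B) = int (card S) - j"
      by (auto simp: chainV_def)
    show "x \<in> {x. chains {} S (int (card S) - j) x}"
    proof (simp, rule chainsI)
      fix B show "x B \<in> P {} B"
      proof (cases "x B = 0")
        case True then show ?thesis by (simp add: P_def span_zero)
      next
        case False
        then have "B \<subseteq> S" using x(2) by blast
        then have "VB sc phi B = span (v ` B)" by (rule VBe)
        moreover have "x B \<in> VB sc phi B" using x(1) by blast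
        ultimately show ?thesis by (simp add: P_def)
      qed
    next
      fix B assume "x B \<noteq> 0" then show "B \<subseteq> S \<and> int (card B) = int (card S) - j" using x by blast
    qed
  next
    fix x assume "x \<in> {x. chains {} S (int (card S) - j) x}"
    then have x: "chains {} S (int (card S) - j) x" by simp
    have "x B \<in> VB sc phi B" for B
    proof (cases "x B = 0")
      case True then show ?thesis using VB0 by simp
    next
      case False
      then have "B \<subseteq> S" using chainsD(2)[OF x] by blast
      then show ?thesis using chainsD(1)[OF x, of B] VBe by (simp add: P_def)
    qed
    moreover have "B \<noteq> {}" if "x B \<noteq> 0" for B
    proof
      assume "B = {}"
      then have "x B \<in> span (v ` {})" using chainsD(1)[OF x, of B] by (simp add: P_def)
      then show False using that by simp
    qed
    ultimately show "x \<in> chainV sc phi S j" using chainsD(2,3)[OF x] by (auto simp: chainV_def)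
  qed
  have rkS: "rk {} S = mrank sc phi S" using mr[of S] by (simp add: rk_def)
  have hd: "homdim sc phi om S i =
      int (C.dim {x \<in> {x. chains {} S (int (card S) - i) x}. d S x = 0})
      - int (C.dim (d S ` {x. chains {} S (int (card S) - i - 1) x}))"
    unfolding homdim_def chV by (simp add: diff_diff_add)
  show ?thesis
  proof (cases "i = int (card S) - int (mrank sc phi S)")
    case False
    then have "int (card S) - i \<noteq> int (rk {} S)" using rkS by simp
    then have "{x \<in> {x. chains {} S (int (card S) - i) x}. d S x = 0} = d S ` {x. chains {} S (int (card S) - i - 1) x}"
      by (rule ker_eq_im)
    then show ?thesis using False hd by simp
  next
    case True
    define r where "r = rk {} S"
    have ki: "int (card S) - i = int r" using True rkS r_def by simp
    have h: "homdim sc phi om S i = (-1)^r * (\<Sum>j<Suc (card S). (-1)^j * int (C.dim {x. chains {} S (int j) x}))"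
      using hd euler ki unfolding r_def by simp
    have sumconv: "(\<Sum>j<Suc (card S). (-1)^j * int (C.dim {x. chains {} S (int j) x}))
        = (\<Sum>J\<in>Pow S. (-1)^card J * int (mrank sc phi J))"
    proof -
      have "(\<Sum>J\<in>Pow S. (-1)^card J * int (mrank sc phi J))
          = (\<Sum>j<Suc (card S). \<Sum>J\<in>{J \<in> Pow S. card J = j}. (-1)^card J * int (mrank sc phi J))"
      proof (rule sum.group[symmetric])
        show "finite (Pow S)" using assms(2) by simp
        show "finite {..<Suc (card S)}" by simp
        show "card ` Pow S \<subseteq> {..<Suc (card S)}"
          using assms(2) card_mono by (auto simp: less_Suc_eq_le)
      qed
      also have "\<dots> = (\<Sum>j<Suc (card S). (-1)^j * int (C.dim {x. chains {} S (int j) x}))"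
      proof (rule sum.cong[OF refl])
        fix j
        have setq: "{J \<in> Pow S. card J = j} = {B. B \<subseteq> S \<and> int (card B) = int j}" by auto
        have "(\<Sum>J\<in>{J \<in> Pow S. card J = j}. (-1)^card J * int (mrank sc phi J))
            = (\<Sum>J\<in>{J \<in> Pow S. card J = j}. (-1)^j * int (dim (span (v ` J))))"
          using mr by (intro sum.cong refl) auto
        also have "\<dots> = (-1)^j * int (\<Sum>B\<in>{B. B \<subseteq> S \<and> int (card B) = int j}. dim (span (v ` B)))"
          by (simp add: sum_distrib_left setq)
        also have "\<dots> = (-1)^j * int (C.dim {x. chains {} S (int j) x})"
          using Ch_props(3)[of "int j"] by simp
        finally show "(\<Sum>J\<in>{J \<in> Pow S. card J = j}. (-1)^card J * int (mrank sc phi J))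
            = (-1)^j * int (C.dim {x. chains {} S (int j) x})" .
      qed
      finally show ?thesis by simp
    qed
    show ?thesis using True h sumconv rkS unfolding beta_inv_def r_def by simp
  qed
qed


end
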